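(* Let $\mathcal{A}=(a_i)_{i=1}^\infty$ be a weakly increasing sequence of positive integers and let $k\geq 7$. If $\gcd A=1$ for every $(k-6)$-multisubset $A$ of $\{a_1,\ldots,a_k\}$, then the sequence $(p_\mathcal{A}(n,k))_{n\ge0}$ is asymptotically $2$-log-concave.
   Context: The restricted partition function $p_\mathcal{A}(n,k)$ is defined by $\sum_{n\ge0}p_\mathcal{A}(n,k)x^n=\prod_{i=1}^k(1-x^{a_i})^{-1}$ (partitions of $n$ with parts in the multiset $\{a_1,\ldots,a_k\}$, equal values with different indices counting as distinct colors). A $j$-multisubset of $\{a_1,\ldots,a_k\}$ is a sub-multiset obtained by choosing $j$ of the $k$ indices. For a real sequence $\omega=(w_i)_{i\ge0}$ define $\widehat{\mathcal L}\omega=(w_{i+1}^2-w_iw_{i+2})_{i\ge0}$ and $\widehat{\mathcal L}^j\omega=\widehat{\mathcal L}(\widehat{\mathcal L}^{j-1}\omega)$. The sequence $\omega$ is asymptotically $r$-log-concave if there is $N$ such that $(\widehat{\mathcal L}^j\omega)_i>0$ for all $j\in\{1,\ldots,r\}$ and all $i\geq N$. *)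

theory Defs
  imports "HOL-Computational_Algebra.Computational_Algebra"
begin

definition p_A :: "(nat \<Rightarrow> nat) \<Rightarrow> nat \<Rightarrow> nat \<Rightarrow> real" where
  "p_A a n k = fps_nth (\<Prod>i\<in>{1..k}. inverse (1 - fps_X ^ (a i))) n"

definition Lhat :: "(nat \<Rightarrow> real) \<Rightarrow> (nat \<Rightarrow> real)" where
  "Lhat w = (\<lambda>i. (w (i+1))^2 - w i * w (i+2))"

definition asymp_r_log_concave :: "nat \<Rightarrow> (nat \<Rightarrow> real) \<Rightarrow> bool" where
  "asymp_r_log_concave r w \<longleftrightarrow>
     (\<exists>N. \<forall>j\<in>{1..r}. \<forall>i\<ge>N. (Lhat ^^ j) w i > 0)"

end

theory Submission
  imports Defs "HOL-Computational_Algebra.Field_as_Ring"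
begin


lemma inv_1mXa:
  assumes "a > 0"
  shows "inverse (1 - fps_X ^ a :: real fps) = Abs_fps (\<lambda>n. if a dvd n then 1 else 0)"
proof (rule fps_inverse_unique, rule fps_ext)
  fix n
  show "((1 - fps_X ^ a) * Abs_fps (\<lambda>n. if a dvd n then 1 else 0 :: real)) $ n = (1::real fps) $ n"
  proof (cases "n < a")
    case True
    then have "a dvd n \<longleftrightarrow> n = 0" using assms by (auto dest: dvd_imp_le)
    then show ?thesis using True by (simp add: algebra_simps fps_X_power_mult_nth)
  next
    case False
    then have "a dvd n \<longleftrightarrow> a dvd (n - a)" using assms
      by (metis dvd_minus_self le_add_diff_inverse not_less dvd_add_right_iff) 
    moreover have "n \<noteq> 0" using False assms by auto
    ultimately show ?thesis using False by (simp add: algebra_simps fps_X_power_mult_nth)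
  qed
qed

lemma one_minus_X_mult_nth:
  "((1 - fps_X) * f) $ n = f $ n - (if n = 0 then 0 else f $ (n - 1 :: nat))" for f :: "real fps"
  by (simp add: algebra_simps)

lemma inv_1mX_pow:
  "inverse ((1 - fps_X) ^ Suc r :: real fps) = Abs_fps (\<lambda>n. real ((r + n) choose n))"
proof (rule fps_inverse_unique)
  show "(1 - fps_X) ^ Suc r * Abs_fps (\<lambda>n. real ((r + n) choose n)) = 1"
  proof (induction r)
    case 0
    show ?case by (rule fps_ext) (simp add: one_minus_X_mult_nth del: power_Suc)
  next
    case (Suc r)
    have "(1 - fps_X) * Abs_fps (\<lambda>n. real ((Suc r + n) choose n)) = Abs_fps (\<lambda>n. real ((r + n) choose n))"
    proof (rule fps_ext)
      fix n
      show "((1 - fps_X) * Abs_fps (\<lambda>n. real ((Suc r + n) choose n))) $ n = Abs_fps (\<lambda>n. real ((r + n) choose n)) $ n"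
      proof (cases n)
        case (Suc m)
        then show ?thesis by (simp add: one_minus_X_mult_nth)
      qed (simp add: one_minus_X_mult_nth)
    qed
    then show ?case using Suc.IH by (metis (no_types, lifting) mult.assoc power_Suc2 mult.commute)
  qed
qed



definition Bnd :: "nat \<Rightarrow> real fps \<Rightarrow> bool" where
  "Bnd e f \<longleftrightarrow> (\<exists>C. \<forall>n. \<bar>f $ n\<bar> \<le> C * (real n + 1) ^ e)"

lemma Bnd_nonneg: "Bnd e f \<Longrightarrow> \<exists>C\<ge>0. \<forall>n. \<bar>f $ n\<bar> \<le> C * (real n + 1) ^ e"
proof -
  assume "Bnd e f"
  then obtain C where C: "\<forall>n. \<bar>f $ n\<bar> \<le> C * (real n + 1) ^ e" unfolding Bnd_def by blast
  have "\<bar>f $ n\<bar> \<le> max C 0 * (real n + 1) ^ e" for n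
  proof -
    have "C * (real n + 1) ^ e \<le> max C 0 * (real n + 1) ^ e" by (intro mult_right_mono) auto
    then show ?thesis using C[rule_format, of n] by linarith
  qed
  then show ?thesis by (intro exI[of _ "max C 0"]) auto
qed
    
lemma Bnd_add: "Bnd e f \<Longrightarrow> Bnd e g \<Longrightarrow> Bnd e (f + g)"
proof -
  assume "Bnd e f" "Bnd e g"
  then obtain C D where C: "\<forall>n. \<bar>f $ n\<bar> \<le> C * (real n + 1) ^ e" and D: "\<forall>n. \<bar>g $ n\<bar> \<le> D * (real n + 1) ^ e"
    unfolding Bnd_def by blast
  have "\<bar>(f + g) $ n\<bar> \<le> (C + D) * (real n + 1) ^ e" for n
    using C[rule_format, of n] D[rule_format, of n] by (simp add: algebra_simps abs_triangle_ineq order_trans[OF abs_triangle_ineq])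
  then show ?thesis unfolding Bnd_def by blast
qed

lemma Bnd_zero: "Bnd e 0" unfolding Bnd_def by (intro exI[of _ 0]) simp

lemma Bnd_sum: "(\<And>i. i \<in> J \<Longrightarrow> Bnd e (f i)) \<Longrightarrow> Bnd e (\<Sum>i\<in>J. f i)"
proof (induction J rule: infinite_finite_induct)
  case (insert x F) then show ?case by (simp add: Bnd_add)
qed (simp_all add: Bnd_zero)

lemma Bnd_mono: "Bnd e f \<Longrightarrow> e \<le> e' \<Longrightarrow> Bnd e' f"
proof -
  assume "Bnd e f" "e \<le> e'"
  then obtain C where C: "C \<ge> 0" "\<forall>n. \<bar>f $ n\<bar> \<le> C * (real n + 1) ^ e" using Bnd_nonneg by blast
  have "\<bar>f $ n\<bar> \<le> C * (real n + 1) ^ e'" for n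
  proof -
    have "(real n + 1) ^ e \<le> (real n + 1) ^ e'" using \<open>e \<le> e'\<close> by (intro power_increasing) auto
    then show ?thesis using C(2)[rule_format, of n] C(1) by (meson mult_left_mono order_trans)
  qed
  then show ?thesis unfolding Bnd_def by blast
qed

lemma Bnd_poly_mult:
  assumes "Bnd e f"
  shows "Bnd e (fps_of_poly u * f)"
proof -
  obtain C where C: "C \<ge> 0" "\<forall>n. \<bar>f $ n\<bar> \<le> C * (real n + 1) ^ e" using Bnd_nonneg assms by blast
  define S where "S = (\<Sum>i\<le>degree u. \<bar>coeff u i\<bar>)"
  have "\<bar>(fps_of_poly u * f) $ n\<bar> \<le> (S * C) * (real n + 1) ^ e" for n
  proof -
    have "\<bar>(fps_of_poly u * f) $ n\<bar> = \<bar>\<Sum>i=0..n. coeff u i * f $ (n - i)\<bar>" by (simp add: fps_mult_nth)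
    also have "\<dots> \<le> (\<Sum>i=0..n. \<bar>coeff u i\<bar> * (C * (real n + 1) ^ e))"
    proof (rule order_trans[OF sum_abs], rule sum_mono)
      fix i assume i: "i \<in> {0..n}"
      have "\<bar>f $ (n - i)\<bar> \<le> C * (real (n - i) + 1) ^ e" using C(2) by blast
      also have "\<dots> \<le> C * (real n + 1) ^ e" using C(1) i by (intro mult_left_mono power_mono) auto
      finally show "\<bar>coeff u i * f $ (n - i)\<bar> \<le> \<bar>coeff u i\<bar> * (C * (real n + 1) ^ e)"
        by (simp add: abs_mult mult_left_mono)
    qed
    also have "\<dots> = (\<Sum>i=0..n. \<bar>coeff u i\<bar>) * (C * (real n + 1) ^ e)" by (simp add: sum_distrib_right)
    also have "(\<Sum>i=0..n. \<bar>coeff u i\<bar>) \<le> S"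
    proof -
      have "(\<Sum>i=0..n. \<bar>coeff u i\<bar>) \<le> (\<Sum>i\<in>{0..n} \<union> {..degree u}. \<bar>coeff u i\<bar>)"
        by (rule sum_mono2) auto
      also have "\<dots> = S" unfolding S_def
        by (rule sum.mono_neutral_right) (auto simp: coeff_eq_0)
      finally show ?thesis .
    qed
    then have "(\<Sum>i=0..n. \<bar>coeff u i\<bar>) * (C * (real n + 1) ^ e) \<le> S * (C * (real n + 1) ^ e)"
      using C(1) by (intro mult_right_mono) auto
    finally show ?thesis by (simp add: mult.assoc)
  qed
  then show ?thesis unfolding Bnd_def by blast
qed

definition FR :: "(nat \<Rightarrow> nat) \<Rightarrow> nat set \<Rightarrow> real fps" where
  "FR a R = (\<Prod>i\<in>R. inverse (1 - fps_X ^ a i))"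

lemma FR_base:
  assumes "finite R" "R \<noteq> {}" "\<And>i. i \<in> R \<Longrightarrow> a i > 0"
  shows "0 \<le> FR a R $ n \<and> FR a R $ n \<le> (real n + 1) ^ (card R - 1)"
  using assms
proof (induction R arbitrary: n rule: finite_ne_induct)
  case (singleton x)
  then show ?case by (simp add: FR_def inv_1mXa)
next
  case (insert x F)
  have ih: "0 \<le> FR a F $ m \<and> FR a F $ m \<le> (real m + 1) ^ (card F - 1)" for m
    using insert by auto
  have FR: "FR a (insert x F) = inverse (1 - fps_X ^ a x) * FR a F"
    using insert by (simp add: FR_def)
  have cF: "card F \<ge> 1" using insert by (simp add: Suc_leI card_gt_0_iff)
  let ?g = "\<lambda>i. (if a x dvd i then 1 else 0 :: real)"
  have eq: "FR a (insert x F) $ n = (\<Sum>i=0..n. ?g i * FR a F $ (n - i))"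
    using insert by (simp add: FR fps_mult_nth inv_1mXa)
  have "(\<Sum>i=0..n. ?g i * FR a F $ (n - i)) \<le> (\<Sum>i=0..n. (real n + 1) ^ (card F - 1))"
  proof (rule sum_mono)
    fix i assume i: "i \<in> {0..n}"
    have "FR a F $ (n - i) \<le> (real (n - i) + 1) ^ (card F - 1)" using ih by blast
    also have "\<dots> \<le> (real n + 1) ^ (card F - 1)" using i by (intro power_mono) auto
    finally show "?g i * FR a F $ (n - i) \<le> (real n + 1) ^ (card F - 1)" using ih[of "n-i"] by auto
  qed
  also have "\<dots> = (real n + 1) ^ (card (insert x F) - 1)"
  proof -
    have c: "card (insert x F) - 1 = Suc (card F - 1)" using insert cF by simp
    show ?thesis unfolding c by (simp add: algebra_simps)
  qed
  finally have up: "FR a (insert x F) $ n \<le> (real n + 1) ^ (card (insert x F) - 1)" using eq by simp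
  have "0 \<le> (\<Sum>i=0..n. ?g i * FR a F $ (n - i))" using ih by (intro sum_nonneg) auto
  with up eq show ?case by simp
qed

lemma Bnd_FR:
  assumes "finite R" "R \<noteq> {}" "\<And>i. i \<in> R \<Longrightarrow> a i > 0"
  shows "Bnd (card R - 1) (FR a R)"
  unfolding Bnd_def using FR_base[OF assms] by (intro exI[of _ 1]) auto



definition qa :: "nat \<Rightarrow> real poly" where "qa n = 1 - [:0,1:] ^ n"

lemma fps_qa: "fps_of_poly (qa n) = 1 - fps_X ^ n"
  by (simp add: qa_def fps_of_poly_diff fps_of_poly_power)

lemma qa_gcd2: "\<exists>u v. u * qa a + v * qa b = qa (gcd a b)"
proof (induction "a + b" arbitrary: a b rule: less_induct)
  case less
  show ?case
  proof (cases "a = 0 \<or> b = 0")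
    case True
    then show ?thesis
    proof
      assume "a = 0" then show ?thesis by (intro exI[of _ 0] exI[of _ 1]) simp
    next
      assume "b = 0" then show ?thesis by (intro exI[of _ 1] exI[of _ 0]) simp
    qed
  next
    case False
    show ?thesis
    proof (cases "b \<le> a")
      case True
      obtain u v where uv: "u * qa (a - b) + v * qa b = qa (gcd (a - b) b)"
        using less(1)[of "a - b" b] False True by auto
      have e: "qa (a - b) = qa a - [:0,1:] ^ (a - b) * qa b"
        using True by (simp add: qa_def algebra_simps flip: power_add)
      have "u * qa a + (v - u * [:0,1:] ^ (a - b)) * qa b = qa (gcd a b)"
        using uv True unfolding e gcd_diff1_nat[OF True] by (simp add: algebra_simps)
      then show ?thesis by blast
    next
      case f2: False
      obtain u v where uv: "u * qa (b - a) + v * qa a = qa (gcd (b - a) a)"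
        using less(1)[of "b - a" a] False f2 by auto
      have e: "qa (b - a) = qa b - [:0,1:] ^ (b - a) * qa a"
        using f2 by (simp add: qa_def algebra_simps flip: power_add)
      have g: "gcd (b - a) a = gcd a b" using f2 by (metis gcd_diff1_nat gcd.commute nat_le_linear)
      have "(v - u * [:0,1:] ^ (b - a)) * qa a + u * qa b = qa (gcd a b)"
        using uv unfolding e g by (simp add: algebra_simps)
      then show ?thesis by blast
    qed
  qed
qed

lemma qa_gcd_set: "finite J \<Longrightarrow> \<exists>u. (\<Sum>i\<in>J. u i * qa (a i)) = qa (Gcd (a ` J))"
proof (induction J rule: finite_induct)
  case empty
  then show ?case by (simp add: qa_def)
next
  case (insert x F)
  obtain u where u: "(\<Sum>i\<in>F. u i * qa (a i)) = qa (Gcd (a ` F))" using insert by blast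
  obtain U V where UV: "U * qa (a x) + V * qa (Gcd (a ` F)) = qa (gcd (a x) (Gcd (a ` F)))"
    using qa_gcd2 by blast
  define u' where "u' = (\<lambda>i. if i = x then U else V * u i)"
  have "(\<Sum>i\<in>insert x F. u' i * qa (a i)) = U * qa (a x) + (\<Sum>i\<in>F. V * (u i * qa (a i)))"
  proof -
    have "(\<Sum>i\<in>F. u' i * qa (a i)) = (\<Sum>i\<in>F. V * (u i * qa (a i)))"
      using insert(2) by (intro sum.cong refl) (auto simp: u'_def)
    then show ?thesis using insert(1,2) by (simp add: u'_def)
  qed
  also have "\<dots> = U * qa (a x) + V * (\<Sum>i\<in>F. u i * qa (a i))" by (subst sum_distrib_left) (rule refl)
  also have "\<dots> = qa (Gcd (a ` insert x F))" unfolding u UV image_insert Gcd_insert ..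
  finally show ?case by blast
qed

lemma FR_remove:
  assumes "finite R" "i \<in> R" "a i > 0"
  shows "(1 - fps_X ^ a i) * FR a R = FR a (R - {i})"
proof -
  have "FR a R = inverse (1 - fps_X ^ a i) * FR a (R - {i})"
    unfolding FR_def using assms by (simp add: prod.remove)
  moreover have i: "(1 - fps_X ^ a i) * inverse (1 - fps_X ^ a i) = (1 :: real fps)"
    using assms by (intro inverse_mult_eq_1') simp
  ultimately show ?thesis by (simp only: mult.assoc[symmetric] i mult_1)
qed

lemma ideal_step:
  assumes "finite R" "J \<subseteq> R" "Gcd (a ` J) = 1" "\<And>i. i \<in> R \<Longrightarrow> a i > 0"
  shows "\<exists>u. (1 - fps_X) * FR a R = (\<Sum>i\<in>J. fps_of_poly (u i) * FR a (R - {i}))"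
proof -
  have fJ: "finite J" using assms finite_subset by blast
  obtain u where u: "(\<Sum>i\<in>J. u i * qa (a i)) = qa 1" using qa_gcd_set[OF fJ, of a] assms by auto
  have "1 - fps_X = (\<Sum>i\<in>J. fps_of_poly (u i) * (1 - fps_X ^ a i) :: real fps)"
    using arg_cong[OF u, of fps_of_poly] by (simp add: fps_of_poly_sum fps_of_poly_mult fps_qa)
  then have "(1 - fps_X) * FR a R = (\<Sum>i\<in>J. fps_of_poly (u i) * ((1 - fps_X ^ a i) * FR a R))"
    by (simp add: sum_distrib_right mult.assoc)
  also have "\<dots> = (\<Sum>i\<in>J. fps_of_poly (u i) * FR a (R - {i}))"
    using assms by (intro sum.cong refl) (auto simp: FR_remove)
  finally show ?thesis by blast
qed

lemma Bnd_main:
  assumes pos: "\<And>i. 1 \<le> i \<Longrightarrow> a i > 0"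
    and k7: "k \<ge> 7"
    and gcd: "\<And>J. J \<subseteq> {1..k} \<Longrightarrow> card J = k - 6 \<Longrightarrow> Gcd (a ` J) = 1"
  shows "R \<subseteq> {1..k} \<Longrightarrow> card R \<ge> k - 6 + j \<Longrightarrow> Bnd (card R - 1 - j) ((1 - fps_X) ^ j * FR a R)"
proof (induction j arbitrary: R)
  case 0
  have "finite R" using 0 finite_subset by blast
  moreover have "R \<noteq> {}" using 0 k7 by auto
  moreover have "\<And>i. i \<in> R \<Longrightarrow> a i > 0" using 0 pos by auto
  ultimately show ?case using Bnd_FR[of R a] by auto
next
  case (Suc j)
  have fR: "finite R" using Suc finite_subset by blast
  have "k - 6 \<le> card R" using Suc.prems(2) by linarith
  then obtain J where J: "J \<subseteq> R" "card J = k - 6" by (rule obtain_subset_with_card_n)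
  have gJ: "Gcd (a ` J) = 1" using J Suc.prems(1) by (intro gcd) auto
  have posR: "\<And>i. i \<in> R \<Longrightarrow> a i > 0" using Suc.prems(1) pos by auto
  obtain u where u: "(1 - fps_X) * FR a R = (\<Sum>i\<in>J. fps_of_poly (u i) * FR a (R - {i}))"
    using ideal_step[OF fR J(1) gJ posR] by blast
  have "(1 - fps_X) ^ Suc j * FR a R = (\<Sum>i\<in>J. fps_of_poly (u i) * ((1 - fps_X) ^ j * FR a (R - {i})))"
  proof -
    have "(1 - fps_X) ^ Suc j * FR a R = (1 - fps_X) ^ j * ((1 - fps_X) * FR a R)"
      by (simp add: mult.assoc mult.commute)
    also have "\<dots> = (\<Sum>i\<in>J. (1 - fps_X) ^ j * (fps_of_poly (u i) * FR a (R - {i})))"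
      by (simp only: u sum_distrib_left)
    finally show ?thesis by (simp add: mult.left_commute)
  qed
  moreover have "Bnd (card R - 1 - Suc j) (fps_of_poly (u i) * ((1 - fps_X) ^ j * FR a (R - {i})))" if i: "i \<in> J" for i
  proof -
    have c: "card (R - {i}) = card R - 1" using i J fR by (simp add: card_Diff_singleton subsetD)
    have "Bnd (card (R - {i}) - 1 - j) ((1 - fps_X) ^ j * FR a (R - {i}))"
    proof (rule Suc.IH)
      show "R - {i} \<subseteq> {1..k}" using Suc.prems(1) by blast
      show "k - 6 + j \<le> card (R - {i})" using Suc.prems(2) c by linarith
    qed
    then show ?thesis using c by (simp add: Bnd_poly_mult)
  qed
  ultimately show ?case by (simp add: Bnd_sum)
qed



lemma Lprod: "(\<lambda>n. (\<Prod>l\<in>L. real n + g l) / real n ^ card L) \<longlonglongrightarrow> 1"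
proof -
  have lim: "(\<lambda>n. \<Prod>l\<in>L. 1 + g l / real n) \<longlonglongrightarrow> (\<Prod>l\<in>L. 1 + 0)"
    by (intro tendsto_prod tendsto_add tendsto_const lim_const_over_n)
  have ev: "\<forall>\<^sub>F n in sequentially. (\<Prod>l\<in>L. 1 + g l / real n) = (\<Prod>l\<in>L. real n + g l) / real n ^ card L"
  proof (rule eventually_sequentiallyI[of 1])
    fix n :: nat assume "n \<ge> 1"
    then have "real n \<noteq> 0" by simp
    then have "(\<Prod>l\<in>L. 1 + g l / real n) = (\<Prod>l\<in>L. (real n + g l) / real n)"
      by (intro prod.cong refl) (simp add: field_simps)
    also have "\<dots> = (\<Prod>l\<in>L. real n + g l) / real n ^ card L"
      by (simp add: prod_dividef)
    finally show "(\<Prod>l\<in>L. 1 + g l / real n) = (\<Prod>l\<in>L. real n + g l) / real n ^ card L" .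
  qed
  show ?thesis using Lim_transform_eventually[OF lim ev] by simp
qed

lemma binom_real: "real ((r + N) choose N) = (\<Prod>l\<in>{0..<r}. real N + (real r - real l)) / fact r"
proof -
  have "real ((r + N) choose N) = real ((r + N) choose r)"
    by (simp add: binomial_symmetric[of r "r + N"])
  also have "\<dots> = (real (r + N) gchoose r)" by (rule binomial_gbinomial)
  also have "\<dots> = (\<Prod>l\<in>{0..<r}. real N + (real r - real l)) / fact r"
    by (simp add: gbinomial_prod_rev algebra_simps)
  finally show ?thesis .
qed

lemma G1:
  "(\<lambda>n. (fps_of_poly A * inverse ((1 - fps_X) ^ Suc r)) $ (n + s) / real n ^ r) \<longlonglongrightarrow> poly A 1 / fact r"
proof -
  define d where "d = degree A"
  have lim: "(\<lambda>n. \<Sum>i\<le>d. coeff A i * ((\<Prod>l\<in>{0..<r}. real n + (real s - real i + real r - real l)) / real n ^ r) / fact r)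
     \<longlonglongrightarrow> (\<Sum>i\<le>d. coeff A i * 1 / fact r)"
    by (intro tendsto_intros Lprod[where L="{0..<r}", simplified]) auto
  have ev: "\<forall>\<^sub>F n in sequentially. (\<Sum>i\<le>d. coeff A i * ((\<Prod>l\<in>{0..<r}. real n + (real s - real i + real r - real l)) / real n ^ r) / fact r)
     = (fps_of_poly A * inverse ((1 - fps_X) ^ Suc r)) $ (n + s) / real n ^ r"
  proof (rule eventually_sequentiallyI[of d])
    fix n assume n: "n \<ge> d"
    have "(fps_of_poly A * inverse ((1 - fps_X) ^ Suc r)) $ (n + s) = (\<Sum>i=0..n+s. coeff A i * real ((r + (n + s - i)) choose (n + s - i)))"
      unfolding fps_mult_nth inv_1mX_pow by simp
    also have "\<dots> = (\<Sum>i\<le>d. coeff A i * real ((r + (n + s - i)) choose (n + s - i)))"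
      using n by (intro sum.mono_neutral_right) (auto simp: d_def coeff_eq_0)
    also have "\<dots> = (\<Sum>i\<le>d. coeff A i * ((\<Prod>l\<in>{0..<r}. real n + (real s - real i + real r - real l)) / fact r))"
    proof (intro sum.cong refl)
      fix i assume "i \<in> {..d}"
      then have "i \<le> n" using n by simp
      then have "real (n + s - i) = real n + (real s - real i)" by simp
      then show "coeff A i * real ((r + (n + s - i)) choose (n + s - i)) = coeff A i * ((\<Prod>l\<in>{0..<r}. real n + (real s - real i + real r - real l)) / fact r)"
        unfolding binom_real by (simp add: algebra_simps)
    qed
    finally show "(\<Sum>i\<le>d. coeff A i * ((\<Prod>l\<in>{0..<r}. real n + (real s - real i + real r - real l)) / real n ^ r) / fact r)
     = (fps_of_poly A * inverse ((1 - fps_X) ^ Suc r)) $ (n + s) / real n ^ r"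
      by (simp add: sum_divide_distrib mult.commute)
  qed
  have "(\<Sum>i\<le>d. coeff A i * 1 / fact r) = poly A 1 / fact r"
    by (simp add: poly_altdef d_def sum_divide_distrib)
  then show ?thesis using Lim_transform_eventually[OF lim ev] by simp
qed

lemma G2:
  assumes "Bnd b f" "b < q"
  shows "(\<lambda>n. f $ (n + s) / real n ^ q) \<longlonglongrightarrow> 0"
proof -
  obtain C where C: "C \<ge> 0" "\<forall>n. \<bar>f $ n\<bar> \<le> C * (real n + 1) ^ b" using Bnd_nonneg assms(1) by blast
  define g where "g = (\<lambda>n::nat. C * 2 ^ b / real n)"
  have g: "g \<longlonglongrightarrow> 0" unfolding g_def by (rule lim_const_over_n)
  have bound: "\<forall>\<^sub>F n in sequentially. \<bar>f $ (n + s) / real n ^ q\<bar> \<le> g n"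
  proof (rule eventually_sequentiallyI[of "s + 1"])
    fix n assume n: "n \<ge> s + 1"
    have n0: "real n > 0" using n by simp
    have "\<bar>f $ (n + s)\<bar> \<le> C * (real (n + s) + 1) ^ b" using C by blast
    also have "\<dots> \<le> C * (2 * real n) ^ b" using n C(1) by (intro mult_left_mono power_mono) auto
    also have "\<dots> = C * 2 ^ b * real n ^ b" by (simp add: power_mult_distrib)
    finally have 1: "\<bar>f $ (n + s)\<bar> \<le> C * 2 ^ b * real n ^ b" .
    have "real n ^ Suc b \<le> real n ^ q" using assms(2) n by (intro power_increasing) auto
    then have 2: "real n ^ b * real n \<le> real n ^ q" by (simp add: mult.commute)
    have "\<bar>f $ (n + s) / real n ^ q\<bar> = \<bar>f $ (n + s)\<bar> / real n ^ q" by (simp add: abs_divide)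
    also have "\<dots> \<le> C * 2 ^ b * real n ^ b / real n ^ q" using 1 n0 by (intro divide_right_mono) auto
    also have "\<dots> \<le> C * 2 ^ b * real n ^ b / (real n ^ b * real n)"
      using 2 n0 C(1) by (intro divide_left_mono mult_pos_pos) auto
    also have "\<dots> = g n" using n0 by (simp add: g_def)
    finally show "\<bar>f $ (n + s) / real n ^ q\<bar> \<le> g n" .
  qed
  have m: "(\<lambda>n. - g n) \<longlonglongrightarrow> 0" using tendsto_minus[OF g] by simp
  show ?thesis
  proof (rule tendsto_sandwich[OF _ _ m g])
    show "\<forall>\<^sub>F n in sequentially. - g n \<le> f $ (n + s) / real n ^ q"
      using bound by (rule eventually_mono) (use abs_le_iff in linarith)
    show "\<forall>\<^sub>F n in sequentially. f $ (n + s) / real n ^ q \<le> g n"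
      using bound by (rule eventually_mono) (use abs_le_iff in linarith)
  qed
qed



definition fd :: "(nat \<Rightarrow> real) \<Rightarrow> nat \<Rightarrow> real" where "fd w = (\<lambda>n. w (Suc n) - w n)"

lemma fd_shift: "(fd ^^ j) w (Suc n) = (fd ^^ j) w n + (fd ^^ Suc j) w n"
  by (simp add: fd_def)

lemma Lhat_D: "Lhat w m = ((fd ^^ 1) w m)^2 - (fd ^^ 0) w m * (fd ^^ 2) w m"
proof -
  have 1: "w (m + 1) = (fd ^^ 0) w m + (fd ^^ 1) w m" using fd_shift[of 0 w m] by simp
  have 2: "w (m + 2) = (fd ^^ 0) w m + 2 * (fd ^^ 1) w m + (fd ^^ 2) w m"
    using fd_shift[of 0 w "Suc m"] fd_shift[of 0 w m] fd_shift[of 1 w m] by (simp add: numeral_2_eq_2)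
  show ?thesis unfolding Lhat_def 1 2 by (simp add: algebra_simps power2_eq_square)
qed

lemma analytic:
  fixes w :: "nat \<Rightarrow> real" and e :: nat and c :: real
  defines "d \<equiv> real e + 4"
  assumes c: "c > 0"
    and l0: "(\<lambda>n. (fd ^^ 0) w n / real n ^ (e + 4)) \<longlonglongrightarrow> c"
    and l1: "(\<lambda>n. (fd ^^ 1) w n / real n ^ (e + 3)) \<longlonglongrightarrow> c * d"
    and l2: "(\<lambda>n. (fd ^^ 2) w n / real n ^ (e + 2)) \<longlonglongrightarrow> c * d * (d - 1)"
    and l3: "(\<lambda>n. (fd ^^ 3) w n / real n ^ (e + 1)) \<longlonglongrightarrow> c * d * (d - 1) * (d - 2)"
    and l4: "(\<lambda>n. (fd ^^ 4) w n / real n ^ e) \<longlonglongrightarrow> c * d * (d - 1) * (d - 2) * (d - 3)"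
  shows "\<exists>N. \<forall>i\<ge>N. Lhat w i > 0 \<and> Lhat (Lhat w) i > 0"
proof -
  define y where "y = (\<lambda>j n. (fd ^^ j) w n / real n ^ (e + 4 - j))"
  have y0: "y 0 \<longlonglongrightarrow> c" and y1: "y 1 \<longlonglongrightarrow> c * d" and y2: "y 2 \<longlonglongrightarrow> c * d * (d - 1)"
    and y3: "y 3 \<longlonglongrightarrow> c * d * (d - 1) * (d - 2)" and y4: "y 4 \<longlonglongrightarrow> c * d * (d - 1) * (d - 2) * (d - 3)"
    using l0 l1 l2 l3 l4 by (simp_all add: y_def numeral_eq_Suc)
  define E1 where "E1 = (\<lambda>n. y 1 n ^ 2 - y 0 n * y 2 n)"
  define Ed where "Ed = (\<lambda>n. y 1 n * y 2 n - y 0 n * y 3 n + (y 2 n ^ 2 - y 1 n * y 3 n) / real n)"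
  define Edd where "Edd = (\<lambda>n. y 2 n ^ 2 - y 0 n * y 4 n + 2 * (y 2 n * y 3 n - y 1 n * y 4 n) / real n
      + (y 3 n ^ 2 - y 2 n * y 4 n) / real n / real n)"
  have inv0: "(\<lambda>n. 1 / real n) \<longlonglongrightarrow> 0" by (rule lim_const_over_n)
  have lE1: "E1 \<longlonglongrightarrow> (c * d) ^ 2 - c * (c * d * (d - 1))"
    unfolding E1_def by (intro tendsto_intros y0 y1 y2)
  have lE2: "(\<lambda>n. Ed n ^ 2 - E1 n * Edd n) \<longlonglongrightarrow>
      (c * d * (c * d * (d - 1)) - c * (c * d * (d - 1) * (d - 2)) + ((c * d * (d - 1)) ^ 2 - c * d * (c * d * (d - 1) * (d - 2))) * 0) ^ 2
      - ((c * d) ^ 2 - c * (c * d * (d - 1))) *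
        ((c * d * (d - 1)) ^ 2 - c * (c * d * (d - 1) * (d - 2) * (d - 3))
          + 2 * (c * d * (d - 1) * (c * d * (d - 1) * (d - 2)) - c * d * (c * d * (d - 1) * (d - 2) * (d - 3))) * 0
          + ((c * d * (d - 1) * (d - 2)) ^ 2 - c * d * (d - 1) * (c * d * (d - 1) * (d - 2) * (d - 3))) * 0 * 0)"
    unfolding Ed_def Edd_def E1_def divide_inverse
    by (intro tendsto_intros y0 y1 y2 y3 y4 inv0[unfolded divide_inverse, simplified])
  have d4: "d \<ge> 4" unfolding d_def by simp
  have pos1: "(c * d) ^ 2 - c * (c * d * (d - 1)) > 0"
  proof -
    have "(c * d) ^ 2 - c * (c * d * (d - 1)) = c ^ 2 * d" by (simp add: algebra_simps power2_eq_square)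
    then show ?thesis using c d4 by simp
  qed
  have pos2: "(c * d * (c * d * (d - 1)) - c * (c * d * (d - 1) * (d - 2)) + ((c * d * (d - 1)) ^ 2 - c * d * (c * d * (d - 1) * (d - 2))) * 0) ^ 2
      - ((c * d) ^ 2 - c * (c * d * (d - 1))) *
        ((c * d * (d - 1)) ^ 2 - c * (c * d * (d - 1) * (d - 2) * (d - 3))
          + 2 * (c * d * (d - 1) * (c * d * (d - 1) * (d - 2)) - c * d * (c * d * (d - 1) * (d - 2) * (d - 3))) * 0
          + ((c * d * (d - 1) * (d - 2)) ^ 2 - c * d * (d - 1) * (c * d * (d - 1) * (d - 2) * (d - 3))) * 0 * 0) > 0"
  proof -
    have "(c * d * (c * d * (d - 1)) - c * (c * d * (d - 1) * (d - 2)) + ((c * d * (d - 1)) ^ 2 - c * d * (c * d * (d - 1) * (d - 2))) * 0) ^ 2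
      - ((c * d) ^ 2 - c * (c * d * (d - 1))) *
        ((c * d * (d - 1)) ^ 2 - c * (c * d * (d - 1) * (d - 2) * (d - 3))
          + 2 * (c * d * (d - 1) * (c * d * (d - 1) * (d - 2)) - c * d * (c * d * (d - 1) * (d - 2) * (d - 3))) * 0
          + ((c * d * (d - 1) * (d - 2)) ^ 2 - c * d * (d - 1) * (c * d * (d - 1) * (d - 2) * (d - 3))) * 0 * 0)
      = 2 * c ^ 4 * d ^ 2 * (d - 1)" by (simp add: algebra_simps power2_eq_square power4_eq_xxxx)
    then show ?thesis using c d4 by simp
  qed
  have ev1: "\<forall>\<^sub>F n in sequentially. E1 n > 0" using order_tendstoD(1)[OF lE1 pos1] .
  have ev2: "\<forall>\<^sub>F n in sequentially. Ed n ^ 2 - E1 n * Edd n > 0" using order_tendstoD(1)[OF lE2 pos2] .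
  have key: "Lhat w n = real n ^ (2 * e + 6) * E1 n \<and> Lhat (Lhat w) n = real n ^ (4 * e + 10) * (Ed n ^ 2 - E1 n * Edd n)"
    if n: "n \<ge> 1" for n
  proof -
    define x where "x = (\<lambda>j. (fd ^^ j) w n)"
    define m where "m = real n ^ e"
    have nz: "real n > 0" using n by simp
    have mz: "m > 0" using nz by (simp add: m_def)
    have px: "x j = y j n * m * real n ^ (4 - j)" if "j \<le> 4" for j
    proof -
      have "real n ^ (e + 4 - j) = m * real n ^ (4 - j)" using that by (simp add: m_def flip: power_add)
      then show ?thesis using nz mz by (simp add: x_def y_def)
    qed
    have x0: "x 0 = y 0 n * m * real n ^ 4" and x1: "x 1 = y 1 n * m * real n ^ 3"
      and x2: "x 2 = y 2 n * m * real n ^ 2" and x3: "x 3 = y 3 n * m * real n"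
      and x4: "x 4 = y 4 n * m" using px by simp_all
    have sh1: "(fd ^^ j) w (n + 1) = x j + x (Suc j)" for j using fd_shift[of j w n] by (simp add: x_def)
    have sh2: "(fd ^^ j) w (n + 2) = x j + 2 * x (Suc j) + x (Suc (Suc j))" for j
      using fd_shift[of j w "Suc n"] fd_shift[of j w n] fd_shift[of "Suc j" w n] by (simp add: x_def numeral_2_eq_2)
    have u0: "Lhat w n = x 1 ^ 2 - x 0 * x 2" using Lhat_D[of w n] by (simp add: x_def numeral_2_eq_2)
    have u1: "Lhat w (n + 1) = (x 1 + x 2) ^ 2 - (x 0 + x 1) * (x 2 + x 3)"
      using Lhat_D[of w "n + 1"] sh1[of 0] sh1[of 1] sh1[of 2] by (simp add: numeral_eq_Suc)
    have u2: "Lhat w (n + 2) = (x 1 + 2 * x 2 + x 3) ^ 2 - (x 0 + 2 * x 1 + x 2) * (x 2 + 2 * x 3 + x 4)"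
      using Lhat_D[of w "n + 2"] sh2[of 0] sh2[of 1] sh2[of 2] by (simp add: numeral_eq_Suc)
    have L2: "Lhat (Lhat w) n = (Lhat w (n + 1) - Lhat w n) ^ 2 - Lhat w n * (Lhat w (n + 2) - 2 * Lhat w (n + 1) + Lhat w n)"
      unfolding Lhat_def[of "Lhat w"] by (simp add: algebra_simps power2_eq_square)
    have D1: "Lhat w (n + 1) - Lhat w n = x 1 * x 2 - x 0 * x 3 + (x 2 ^ 2 - x 1 * x 3)"
      unfolding u0 u1 by (simp add: algebra_simps power2_eq_square)
    have D2: "Lhat w (n + 2) - 2 * Lhat w (n + 1) + Lhat w n = x 2 ^ 2 - x 0 * x 4 + 2 * (x 2 * x 3 - x 1 * x 4) + (x 3 ^ 2 - x 2 * x 4)"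
      unfolding u0 u1 u2 by (simp add: algebra_simps power2_eq_square)
    have pe1: "real n ^ (2 * e + 6) = m ^ 2 * real n ^ 6" by (simp add: m_def power_add power_mult_distrib mult.commute flip: power_mult)
    have pe2: "real n ^ (4 * e + 10) = (m ^ 2 * real n ^ 5) ^ 2" by (simp add: m_def power_add power_mult_distrib mult.commute flip: power_mult)
    have Lw: "Lhat w n = m ^ 2 * real n ^ 6 * E1 n"
      unfolding u0 x0 x1 x2 E1_def by (simp add: algebra_simps power2_eq_square eval_nat_numeral)
    have Dd: "Lhat w (n + 1) - Lhat w n = m ^ 2 * real n ^ 5 * Ed n"
      unfolding D1 x0 x1 x2 x3 Ed_def using nz by (simp add: field_simps power2_eq_square eval_nat_numeral)
    have Ddd: "Lhat w (n + 2) - 2 * Lhat w (n + 1) + Lhat w n = m ^ 2 * real n ^ 4 * Edd n"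
      unfolding D2 x0 x1 x2 x3 x4 Edd_def using nz by (simp add: field_simps power2_eq_square eval_nat_numeral)
    have "Lhat (Lhat w) n = (m ^ 2 * real n ^ 5 * Ed n) ^ 2 - (m ^ 2 * real n ^ 6 * E1 n) * (m ^ 2 * real n ^ 4 * Edd n)"
      unfolding L2 Dd Ddd unfolding Lw ..
    also have "\<dots> = (m ^ 2 * real n ^ 5) ^ 2 * (Ed n ^ 2 - E1 n * Edd n)"
      by (simp add: algebra_simps power2_eq_square)
    finally show ?thesis unfolding pe1 pe2 Lw by simp
  qed
  obtain N where N: "\<And>n. n \<ge> N \<Longrightarrow> E1 n > 0 \<and> Ed n ^ 2 - E1 n * Edd n > 0"
    using eventually_conj[OF ev1 ev2] unfolding eventually_sequentially by blast
  show ?thesis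
  proof (intro exI[of _ "max N 1"] allI impI)
    fix i assume i: "max N 1 \<le> i"
    then have "real i > 0" by simp
    then show "Lhat w i > 0 \<and> Lhat (Lhat w) i > 0" using key[of i] N[of i] i by simp
  qed
qed



definition Phi :: "nat \<Rightarrow> real poly" where "Phi m = (\<Sum>t<m. [:0,1:] ^ t)"

lemma Phi_qa: "[:1,-1:] * Phi m = qa m"
proof -
  have "[:1,-1:] = (1 - [:0,1:] :: real poly)" by (simp add: one_pCons)
  then show ?thesis unfolding Phi_def qa_def by (simp add: one_diff_power_eq)
qed

lemma poly_Phi: "poly (Phi m) 1 = real m"
  by (simp add: Phi_def poly_sum)

lemma fps_lin: "fps_of_poly [:1,-1:] = (1 - fps_X :: real fps)"
  by (simp add: fps_of_poly_linear')

lemma coprime_Q: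
  fixes Q :: "real poly"
  assumes "poly Q 1 \<noteq> 0"
  shows "coprime ([:1,-1:] ^ 5) Q"
proof -
  have p: "prime_elem [:1,-1::real:]" by (rule prime_elem_linear_field_poly) simp
  have nd: "\<not> [:1,-1:] dvd Q"
  proof
    assume "[:1,-1:] dvd Q"
    then obtain r where "Q = [:1,-1:] * r" by (elim dvdE)
    then have "poly Q 1 = 0" by simp
    then show False using assms by simp
  qed
  have "coprime [:1,-1:] Q" using p nd by (rule prime_elem_imp_coprime)
  then show ?thesis by simp
qed

lemma decomp:
  fixes a :: "nat \<Rightarrow> nat" and k :: nat
  assumes pos: "\<And>i. 1 \<le> i \<Longrightarrow> a i > 0"
  obtains A B :: "real poly" where "poly A 1 = 1 / (\<Prod>i\<in>{1..k}. real (a i))"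
    and "\<And>j. j \<le> k \<Longrightarrow> (1 - fps_X) ^ j * FR a {1..k} =
        fps_of_poly A * inverse ((1 - fps_X) ^ (k - j)) + fps_of_poly (B * [:1,-1:] ^ j) * ((1 - fps_X) ^ 5 * FR a {1..k})"
proof -
  define Q where "Q = (\<Prod>i\<in>{1..k}. Phi (a i))"
  have pQ: "poly Q 1 = (\<Prod>i\<in>{1..k}. real (a i))" by (simp add: Q_def poly_prod poly_Phi)
  have pQ0: "poly Q 1 \<noteq> 0" unfolding pQ using pos by (simp add: prod_zero_iff)
  define A where "A = fst (bezout_coefficients Q ([:1,-1:] ^ 5))"
  define B where "B = snd (bezout_coefficients Q ([:1,-1:] ^ 5))"
  have AB: "A * Q + B * [:1,-1:] ^ 5 = 1"
  proof -
    have "coprime Q ([:1,-1:] ^ 5)" using coprime_Q[OF pQ0] by (simp add: coprime_commute)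
    then have "gcd Q ([:1,-1:] ^ 5) = 1" by simp
    then show ?thesis using bezout_coefficients_fst_snd[of Q "[:1,-1:] ^ 5"] by (simp add: A_def B_def)
  qed
  have pA: "poly A 1 = 1 / (\<Prod>i\<in>{1..k}. real (a i))"
  proof -
    have "poly A 1 * poly Q 1 = 1" using arg_cong[OF AB, of "\<lambda>p. poly p 1"] by simp
    then show ?thesis using pQ0 pQ by (simp add: field_simps)
  qed
  define F where "F = FR a {1..k}"
  have P1: "(1 - fps_X) ^ k * fps_of_poly Q = (\<Prod>i\<in>{1..k}. (1 - fps_X ^ a i :: real fps))"
  proof -
    have "(1 - fps_X) ^ k * fps_of_poly Q = (\<Prod>i\<in>{1..k}. (1 - fps_X :: real fps)) * (\<Prod>i\<in>{1..k}. fps_of_poly (Phi (a i)))"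
      by (simp add: Q_def fps_of_poly_prod)
    also have "\<dots> = (\<Prod>i\<in>{1..k}. fps_of_poly ([:1,-1:] * Phi (a i)))"
      by (simp only: prod.distrib fps_of_poly_mult fps_lin)
    also have "\<dots> = (\<Prod>i\<in>{1..k}. (1 - fps_X ^ a i :: real fps))"
      by (simp only: Phi_qa fps_qa)
    finally show ?thesis .
  qed
  have P2: "(\<Prod>i\<in>{1..k}. (1 - fps_X ^ a i :: real fps)) * F = 1"
  proof -
    have "(\<Prod>i\<in>{1..k}. (1 - fps_X ^ a i :: real fps)) * F = (\<Prod>i\<in>{1..k}. (1 - fps_X ^ a i) * inverse (1 - fps_X ^ a i :: real fps))"
      by (simp add: F_def FR_def prod.distrib)
    also have "\<dots> = (\<Prod>i\<in>{1..k}. (1 :: real fps))"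
      using pos by (intro prod.cong refl inverse_mult_eq_1') auto
    finally show ?thesis by simp
  qed
  have invk: "inverse ((1 - fps_X) ^ k) = fps_of_poly Q * F"
    by (rule fps_inverse_unique) (simp only: mult.assoc[symmetric] P1 P2)
  have F: "F = fps_of_poly A * inverse ((1 - fps_X) ^ k) + fps_of_poly B * ((1 - fps_X) ^ 5 * F)"
  proof -
    have "F = (fps_of_poly A * fps_of_poly Q + fps_of_poly B * (1 - fps_X) ^ 5) * F"
      using arg_cong[OF AB, of fps_of_poly] by (simp add: fps_of_poly_add fps_of_poly_mult fps_of_poly_power fps_lin)
    also have "\<dots> = fps_of_poly A * (fps_of_poly Q * F) + fps_of_poly B * ((1 - fps_X) ^ 5 * F)"
      by (simp add: algebra_simps)
    finally show ?thesis unfolding invk .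
  qed
  have sh: "(1 - fps_X) ^ j * inverse ((1 - fps_X) ^ k) = inverse ((1 - fps_X :: real fps) ^ (k - j))" if "j \<le> k" for j
  proof (rule sym, rule fps_inverse_unique)
    have pw: "(1 - fps_X :: real fps) ^ (k - j) * (1 - fps_X) ^ j = (1 - fps_X) ^ k"
      using that by (simp only: power_add[symmetric]) simp
    have "(1 - fps_X) ^ (k - j) * ((1 - fps_X) ^ j * inverse ((1 - fps_X :: real fps) ^ k))
       = ((1 - fps_X) ^ (k - j) * (1 - fps_X) ^ j) * inverse ((1 - fps_X :: real fps) ^ k)"
      by (simp only: mult.assoc)
    also have "\<dots> = 1" unfolding pw by (rule inverse_mult_eq_1') simp
    finally show "(1 - fps_X) ^ (k - j) * ((1 - fps_X) ^ j * inverse ((1 - fps_X :: real fps) ^ k)) = 1" .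
  qed
  show ?thesis
  proof (rule that[OF pA])
    fix j assume j: "j \<le> k"
    have "(1 - fps_X) ^ j * F = fps_of_poly A * ((1 - fps_X) ^ j * inverse ((1 - fps_X) ^ k))
        + fps_of_poly B * (1 - fps_X) ^ j * ((1 - fps_X) ^ 5 * F)"
      by (subst F) (simp add: algebra_simps)
    then show "(1 - fps_X) ^ j * FR a {1..k} = fps_of_poly A * inverse ((1 - fps_X) ^ (k - j))
        + fps_of_poly (B * [:1,-1:] ^ j) * ((1 - fps_X) ^ 5 * FR a {1..k})"
      unfolding sh[OF j] F_def by (simp add: fps_of_poly_mult fps_of_poly_power fps_lin)
  qed
qed



lemma fd_fps: "(fd ^^ j) (\<lambda>n. F $ n) n = ((1 - fps_X) ^ j * F) $ (n + j)"
proof (induction j arbitrary: n)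
  case 0 then show ?case by simp
next
  case (Suc j)
  have "(fd ^^ Suc j) (\<lambda>n. F $ n) n = (fd ^^ j) (\<lambda>n. F $ n) (Suc n) - (fd ^^ j) (\<lambda>n. F $ n) n"
    by (simp add: fd_def)
  also have "\<dots> = ((1 - fps_X) ^ j * F) $ Suc (n + j) - ((1 - fps_X) ^ j * F) $ (n + j)"
    using Suc.IH by simp
  also have "\<dots> = ((1 - fps_X) * ((1 - fps_X) ^ j * F)) $ Suc (n + j)"
    unfolding one_minus_X_mult_nth by simp
  finally show ?case by (simp add: mult.assoc)
qed

theorem proposition4p1:
  fixes a :: "nat \<Rightarrow> nat" and k :: nat
  assumes mono: "\<And>i j. 1 \<le> i \<Longrightarrow> i \<le> j \<Longrightarrow> a i \<le> a j"
    and pos: "\<And>i. 1 \<le> i \<Longrightarrow> a i > 0"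
    and k7: "k \<ge> 7"
    and gcd: "\<And>J. J \<subseteq> {1..k} \<Longrightarrow> card J = k - 6 \<Longrightarrow> Gcd (a ` J) = 1"
  shows "asymp_r_log_concave 2 (\<lambda>n. p_A a n k)"
proof -
  define F where "F = FR a {1..k}"
  have w: "(\<lambda>n. p_A a n k) = (\<lambda>n. F $ n)" by (simp add: p_A_def F_def FR_def)
  have "\<exists>A B :: real poly. poly A 1 = 1 / (\<Prod>i\<in>{1..k}. real (a i)) \<and> (\<forall>j. j \<le> k \<longrightarrow> (1 - fps_X) ^ j * F =
        fps_of_poly A * inverse ((1 - fps_X) ^ (k - j)) + fps_of_poly (B * [:1,-1:] ^ j) * ((1 - fps_X) ^ 5 * F))"
    unfolding F_def
  proof (rule decomp[of a k, OF pos])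
    fix A B :: "real poly"
    assume h1: "poly A 1 = 1 / (\<Prod>i\<in>{1..k}. real (a i))"
      and h2: "\<And>j. j \<le> k \<Longrightarrow> (1 - fps_X) ^ j * FR a {1..k} =
        fps_of_poly A * inverse ((1 - fps_X) ^ (k - j)) + fps_of_poly (B * [:1,-1:] ^ j) * ((1 - fps_X) ^ 5 * FR a {1..k})"
    show "\<exists>A B :: real poly. poly A 1 = 1 / (\<Prod>i\<in>{1..k}. real (a i)) \<and> (\<forall>j. j \<le> k \<longrightarrow> (1 - fps_X) ^ j * FR a {1..k} =
        fps_of_poly A * inverse ((1 - fps_X) ^ (k - j)) + fps_of_poly (B * [:1,-1:] ^ j) * ((1 - fps_X) ^ 5 * FR a {1..k}))"
      by (intro exI[of _ A] exI[of _ B] conjI allI impI h1 h2)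
  qed
  then obtain A B :: "real poly" where pA: "poly A 1 = 1 / (\<Prod>i\<in>{1..k}. real (a i))"
    and dec0: "\<forall>j. j \<le> k \<longrightarrow> (1 - fps_X) ^ j * F =
        fps_of_poly A * inverse ((1 - fps_X) ^ (k - j)) + fps_of_poly (B * [:1,-1:] ^ j) * ((1 - fps_X) ^ 5 * F)"
    by blast
  note dec = dec0[rule_format]
  define e where "e = k - 5"
  have ke: "k = e + 5" and e2: "e \<ge> 2" using k7 by (auto simp: e_def)
  have B5: "Bnd (k - 6) ((1 - fps_X) ^ 5 * F)"
  proof -
    have "Bnd (card {1..k} - 1 - 5) ((1 - fps_X) ^ 5 * FR a {1..k})"
    proof (rule Bnd_main[OF pos k7 gcd])
      show "{1..k} \<subseteq> {1..k}" by (rule order_refl)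
      show "k - 6 + 5 \<le> card {1..k}" using k7 by simp
    qed
    moreover have "card {1..k} - 1 - 5 = k - 6" by simp
    ultimately show ?thesis by (simp only: F_def)
  qed
  have lim: "(\<lambda>n. (fd ^^ j) (\<lambda>n. F $ n) n / real n ^ (e + 4 - j)) \<longlonglongrightarrow> poly A 1 / fact (e + 4 - j)"
    if j: "j \<le> 4" for j
  proof -
    have kj: "k - j = Suc (e + 4 - j)" using j ke by simp
    have jk: "j \<le> k" using j k7 by simp
    note dj = dec[OF jk]
    have eq: "(fd ^^ j) (\<lambda>n. F $ n) n / real n ^ (e + 4 - j) =
       (fps_of_poly A * inverse ((1 - fps_X) ^ Suc (e + 4 - j))) $ (n + j) / real n ^ (e + 4 - j)
       + (fps_of_poly (B * [:1,-1:] ^ j) * ((1 - fps_X) ^ 5 * F)) $ (n + j) / real n ^ (e + 4 - j)" for n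
      unfolding fd_fps dj kj fps_add_nth add_divide_distrib ..
    have l1: "(\<lambda>n. (fps_of_poly A * inverse ((1 - fps_X) ^ Suc (e + 4 - j))) $ (n + j) / real n ^ (e + 4 - j))
        \<longlonglongrightarrow> poly A 1 / fact (e + 4 - j)" by (rule G1)
    have l2: "(\<lambda>n. (fps_of_poly (B * [:1,-1:] ^ j) * ((1 - fps_X) ^ 5 * F)) $ (n + j) / real n ^ (e + 4 - j)) \<longlonglongrightarrow> 0"
      by (rule G2[OF Bnd_poly_mult[OF B5]]) (use j ke e2 in arith)
    show ?thesis unfolding eq using tendsto_add[OF l1 l2] by simp
  qed
  define c where "c = poly A 1 / fact (e + 4)"
  define d where "d = real e + 4"
  have pApos: "poly A 1 > 0" unfolding pA using pos by (auto intro!: prod_pos)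
  have c0: "c > 0" unfolding c_def using pApos by simp
  have f4: "fact (e + 4) = (real e + 4) * fact (e + 3)" and f3: "fact (e + 3) = (real e + 3) * fact (e + 2)"
    and f2: "fact (e + 2) = (real e + 2) * fact (e + 1)" and f1: "fact (e + 1) = (real e + 1) * (fact e :: real)"
    by (simp_all add: eval_nat_numeral)
  have fne: "fact e \<noteq> (0::real)" "real e + 1 \<noteq> 0" "real e + 2 \<noteq> 0" "real e + 3 \<noteq> 0" "real e + 4 \<noteq> 0"
    by simp_all
  have "\<exists>N. \<forall>i\<ge>N. Lhat (\<lambda>n. F $ n) i > 0 \<and> Lhat (Lhat (\<lambda>n. F $ n)) i > 0"
  proof (rule analytic[OF c0])
    show "(\<lambda>n. (fd ^^ 0) (\<lambda>n. F $ n) n / real n ^ (e + 4)) \<longlonglongrightarrow> c"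
      using lim[of 0] by (simp add: c_def)
    have aux: "\<And>p x y :: real. x \<noteq> 0 \<Longrightarrow> p / (x * y) * x = p / y"
      by (simp add: field_simps)
    have r3: "real e + 4 - 1 = real e + 3" and r2: "real e + 4 - 2 = real e + 2"
      and r1: "real e + 4 - 3 = real e + 1" by simp_all
    have m1: "e + 4 - 1 = e + 3" and m2: "e + 4 - 2 = e + 2" and m3: "e + 4 - 3 = e + 1"
      and m4: "e + 4 - 4 = e" by simp_all
    have k1: "c * (real e + 4) = poly A 1 / fact (e + 3)"
      unfolding c_def f4 by (rule aux[OF fne(5)])
    have k2: "c * (real e + 4) * (real e + 4 - 1) = poly A 1 / fact (e + 2)"
    proof -
      have "c * (real e + 4) * (real e + 4 - 1) = poly A 1 / fact (e + 3) * (real e + 3)"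
        by (simp only: k1 r3)
      also have "\<dots> = poly A 1 / fact (e + 2)" unfolding f3 by (rule aux[OF fne(4)])
      finally show ?thesis .
    qed
    have k3: "c * (real e + 4) * (real e + 4 - 1) * (real e + 4 - 2) = poly A 1 / fact (e + 1)"
    proof -
      have "c * (real e + 4) * (real e + 4 - 1) * (real e + 4 - 2) = poly A 1 / fact (e + 2) * (real e + 2)"
        by (simp only: k2 r2)
      also have "\<dots> = poly A 1 / fact (e + 1)" unfolding f2 by (rule aux[OF fne(3)])
      finally show ?thesis .
    qed
    have k4: "c * (real e + 4) * (real e + 4 - 1) * (real e + 4 - 2) * (real e + 4 - 3) = poly A 1 / fact e"
    proof -
      have "c * (real e + 4) * (real e + 4 - 1) * (real e + 4 - 2) * (real e + 4 - 3) = poly A 1 / fact (e + 1) * (real e + 1)"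
        by (simp only: k3 r1)
      also have "\<dots> = poly A 1 / fact e" unfolding f1 by (rule aux[OF fne(2)])
      finally show ?thesis .
    qed
    show "(\<lambda>n. (fd ^^ 1) (\<lambda>n. F $ n) n / real n ^ (e + 3)) \<longlonglongrightarrow> c * (real e + 4)"
      using lim[of 1] unfolding k1 by (simp only: m1)
    show "(\<lambda>n. (fd ^^ 2) (\<lambda>n. F $ n) n / real n ^ (e + 2)) \<longlonglongrightarrow> c * (real e + 4) * (real e + 4 - 1)"
      using lim[of 2] unfolding k2 by (simp only: m2)
    show "(\<lambda>n. (fd ^^ 3) (\<lambda>n. F $ n) n / real n ^ (e + 1)) \<longlonglongrightarrow> c * (real e + 4) * (real e + 4 - 1) * (real e + 4 - 2)"
      using lim[of 3] unfolding k3 by (simp only: m3)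
    show "(\<lambda>n. (fd ^^ 4) (\<lambda>n. F $ n) n / real n ^ e) \<longlonglongrightarrow> c * (real e + 4) * (real e + 4 - 1) * (real e + 4 - 2) * (real e + 4 - 3)"
      using lim[of 4] unfolding k4 by (simp only: m4)
  qed
  then obtain N where N: "\<And>i. i \<ge> N \<Longrightarrow> Lhat (\<lambda>n. F $ n) i > 0 \<and> Lhat (Lhat (\<lambda>n. F $ n)) i > 0" by blast
  show ?thesis unfolding asymp_r_log_concave_def w
  proof (intro exI[of _ N] ballI allI impI)
    fix j i assume j: "j \<in> {1..2::nat}" and i: "N \<le> i"
    then have "j = 1 \<or> j = 2" by auto
    then show "(Lhat ^^ j) (\<lambda>n. F $ n) i > 0" using N[OF i] by (auto simp: numeral_2_eq_2)
  qed
qed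


end
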